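(* If $\mathscr{F}=(\Omega,\sqsubseteq,\mathcal{E},\mathcal{A},\mathcal{K},\mathcal{B})$ is an epistemic possibility frame, then for any $\omega\in\Omega$, the family $\{E\in\mathcal{E}\mid\omega\in\mathbf{A}(E)\}$ contains $\Omega$ and is closed under $\cap$ and under $\neg$, where $\neg E=\{\omega\in\Omega\mid\forall\omega'\sqsubseteq\omega,\ \omega'\notin E\}$.
   Context: For a poset $(\Omega,\sqsubseteq)$, let $\downarrow E=\{\omega\mid \omega\sqsubseteq\nu\text{ for some }\nu\in E\}$, $\downarrow\nu=\downarrow\{\nu\}$, $\rho(E)=\{\omega\mid \forall\omega'\sqsubseteq\omega\ \exists\omega''\sqsubseteq\omega'\colon \omega''\in\downarrow E\}$; $\mathcal{RO}(\Omega,\sqsubseteq)=\{E\mid\rho(E)=E\}$, a Boolean algebra under $\subseteq$ with meet $\cap$, join $E\sqcup F=\rho(E\cup F)$, complement $\neg E$ as in the claim. $\max(E)=\{\omega\in E\mid\text{no }\nu\in E\text{ with }\omega\sqsubseteq\nu,\ \nu\not\sqsubseteq\omega\}$. A possibility frame $(\Omega,\sqsubseteq,\mathcal{E})$ has $\mathcal{E}\subseteq\mathcal{RO}(\Omega,\sqsubseteq)$ nonempty, closed under binary $\cap$ and $\neg$; quasi-principal means: for all $E\in\mathcal{E}$, $\omega\in E$, $\omega\in\downarrow\max(E)$. A possibility frame with awareness $(\Omega,\sqsubseteq,\mathcal{E},\mathcal{A})$: $(\Omega,\sqsubseteq,\mathcal{E})$ quasi-principal with maximum element $m$; $\mathcal{A}:\Omega\to\wp(\Omega)$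 with, for all $\omega,\omega',\nu$: $m\in\mathcal{A}(\omega)$; $\nu\in\mathcal{A}(\omega)\Rightarrow\downarrow\nu\in\mathcal{E}$; $\omega'\sqsubseteq\omega\Rightarrow\mathcal{A}(\omega)\subseteq\mathcal{A}(\omega')$; $\nu\notin\mathcal{A}(\omega)\Rightarrow\exists\omega'\sqsubseteq\omega\ \forall\omega''\sqsubseteq\omega'\ \nu\notin\mathcal{A}(\omega'')$; if $\nu\in\mathcal{A}(\omega)$, $E,E'\in\mathcal{E}$ and $\max(E\cap\downarrow\nu)\cup\max(E'\cap\downarrow\nu)\subseteq\mathcal{A}(\omega)$ then $\max((E\sqcup E')\cap\downarrow\nu)\subseteq\mathcal{A}(\omega)$; and $\mathcal{E}$ is closed under $\mathbf{A}$, where $\omega\in\mathbf{A}(E)$ iff $\forall\omega'\sqsubseteq\omega\ \forall\nu\in\mathcal{A}(\omega')$: $\max(E\cap\downarrow\nu)\cup\max(\neg E\cap\downarrow\nu)\subseteq\mathcal{A}(\omega')$. An epistemic possibility frame $(\Omega,\sqsubseteq,\mathcal{E},\mathcal{A},\mathcal{K},\mathcal{B})$ adds $\mathcal{K},\mathcal{B}:\Omega\to\wp(\Omega)$ such that for $\mathcal{R}\in\{\mathcal{K},\mathcal{B}\}$: $\omega'\sqsubseteq\omega\Rightarrow\mathcal{R}(\omega')\subseteq\mathcal{R}(\omega)$; $\mathcal{R}(\omega)\in\mathcal{RO}(\Omega,\sqsubseteq)$; $\nu\in\mathcal{R}(\omega)\Rightarrow\exists\omega'\sqsubseteq\omega\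 \forall\omega''\sqsubseteq\omega'\ \exists\nu'\sqsubseteq\nu\colon\nu'\in\mathcal{R}(\omega'')$; $\omega\in\mathcal{K}(\omega)$; $\mathcal{B}(\omega)\neq\varnothing$; $\mathcal{B}(\omega)\subseteq\mathcal{K}(\omega)$; and $\{\omega\mid\mathcal{R}(\omega)\subseteq E\}\in\mathcal{E}$ for $E\in\mathcal{E}$. *)

theory Defs
  imports Main
begin

definition poset :: "'w set \<Rightarrow> ('w \<Rightarrow> 'w \<Rightarrow> bool) \<Rightarrow> bool" where
  "poset Om le \<longleftrightarrow>
     (\<forall>x\<in>Om. le x x) \<and>
     (\<forall>x\<in>Om. \<forall>y\<in>Om. le x y \<and> le y x \<longrightarrow> x = y) \<and>
     (\<forall>x\<in>Om. \<forall>y\<in>Om. \<forall>z\<in>Om. le x y \<and> le y z \<longrightarrow> le x z)"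

definition down :: "'w set \<Rightarrow> ('w \<Rightarrow> 'w \<Rightarrow> bool) \<Rightarrow> 'w set \<Rightarrow> 'w set" where
  "down Om le E = {w\<in>Om. \<exists>v\<in>E. le w v}"

definition rho :: "'w set \<Rightarrow> ('w \<Rightarrow> 'w \<Rightarrow> bool) \<Rightarrow> 'w set \<Rightarrow> 'w set" where
  "rho Om le E = {w\<in>Om. \<forall>w'\<in>Om. le w' w \<longrightarrow> (\<exists>w''\<in>Om. le w'' w' \<and> w'' \<in> down Om le E)}"

definition RO :: "'w set \<Rightarrow> ('w \<Rightarrow> 'w \<Rightarrow> bool) \<Rightarrow> 'w set set" where
  "RO Om le = {E. E \<subseteq> Om \<and> rho Om le E = E}"

definition neg :: "'w set \<Rightarrow> ('w \<Rightarrow> 'w \<Rightarrow> bool) \<Rightarrow> 'w set \<Rightarrow> 'w set" where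
  "neg Om le E = {w\<in>Om. \<forall>w'\<in>Om. le w' w \<longrightarrow> w' \<notin> E}"

definition join :: "'w set \<Rightarrow> ('w \<Rightarrow> 'w \<Rightarrow> bool) \<Rightarrow> 'w set \<Rightarrow> 'w set \<Rightarrow> 'w set" where
  "join Om le E F = rho Om le (E \<union> F)"

definition maxs :: "('w \<Rightarrow> 'w \<Rightarrow> bool) \<Rightarrow> 'w set \<Rightarrow> 'w set" where
  "maxs le E = {w\<in>E. \<not> (\<exists>v\<in>E. le w v \<and> \<not> le v w)}"

definition possibility_frame :: "'w set \<Rightarrow> ('w \<Rightarrow> 'w \<Rightarrow> bool) \<Rightarrow> 'w set set \<Rightarrow> bool" where
  "possibility_frame Om le Ev \<longleftrightarrow>
     poset Om le \<and> Ev \<subseteq> RO Om le \<and> Ev \<noteq> {} \<and>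
     (\<forall>E\<in>Ev. \<forall>F\<in>Ev. E \<inter> F \<in> Ev) \<and>
     (\<forall>E\<in>Ev. neg Om le E \<in> Ev)"

definition quasi_principal :: "'w set \<Rightarrow> ('w \<Rightarrow> 'w \<Rightarrow> bool) \<Rightarrow> 'w set set \<Rightarrow> bool" where
  "quasi_principal Om le Ev \<longleftrightarrow>
     (\<forall>E\<in>Ev. \<forall>w\<in>E. w \<in> down Om le (maxs le E))"

definition Aop :: "'w set \<Rightarrow> ('w \<Rightarrow> 'w \<Rightarrow> bool) \<Rightarrow> ('w \<Rightarrow> 'w set) \<Rightarrow> 'w set \<Rightarrow> 'w set" where
  "Aop Om le A E = {w\<in>Om. \<forall>w'\<in>Om. le w' w \<longrightarrow>
      (\<forall>v\<in>A w'. maxs le (E \<inter> down Om le {v}) \<union> maxs le (neg Om le E \<inter> down Om le {v}) \<subseteq> A w')}"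

definition awareness_frame ::
  "'w set \<Rightarrow> ('w \<Rightarrow> 'w \<Rightarrow> bool) \<Rightarrow> 'w set set \<Rightarrow> ('w \<Rightarrow> 'w set) \<Rightarrow> bool" where
  "awareness_frame Om le Ev A \<longleftrightarrow>
     possibility_frame Om le Ev \<and> quasi_principal Om le Ev \<and>
     (\<exists>m\<in>Om. (\<forall>w\<in>Om. le w m) \<and> (\<forall>w\<in>Om. m \<in> A w)) \<and>
     (\<forall>w\<in>Om. A w \<subseteq> Om) \<and>
     (\<forall>w\<in>Om. \<forall>v\<in>A w. down Om le {v} \<in> Ev) \<and>
     (\<forall>w\<in>Om. \<forall>w'\<in>Om. le w' w \<longrightarrow> A w \<subseteq> A w') \<and>
     (\<forall>w\<in>Om. \<forall>v\<in>Om. v \<notin> A w \<longrightarrow>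
        (\<exists>w'\<in>Om. le w' w \<and> (\<forall>w''\<in>Om. le w'' w' \<longrightarrow> v \<notin> A w''))) \<and>
     (\<forall>w\<in>Om. \<forall>v\<in>A w. \<forall>E\<in>Ev. \<forall>E'\<in>Ev.
        maxs le (E \<inter> down Om le {v}) \<union> maxs le (E' \<inter> down Om le {v}) \<subseteq> A w \<longrightarrow>
        maxs le (join Om le E E' \<inter> down Om le {v}) \<subseteq> A w) \<and>
     (\<forall>E\<in>Ev. Aop Om le A E \<in> Ev)"

definition epistemic_rel :: "'w set \<Rightarrow> ('w \<Rightarrow> 'w \<Rightarrow> bool) \<Rightarrow> 'w set set \<Rightarrow> ('w \<Rightarrow> 'w set) \<Rightarrow> bool" where
  "epistemic_rel Om le Ev R \<longleftrightarrow>
     (\<forall>w\<in>Om. R w \<subseteq> Om) \<and>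
     (\<forall>w\<in>Om. \<forall>w'\<in>Om. le w' w \<longrightarrow> R w' \<subseteq> R w) \<and>
     (\<forall>w\<in>Om. R w \<in> RO Om le) \<and>
     (\<forall>w\<in>Om. \<forall>v\<in>R w. \<exists>w'\<in>Om. le w' w \<and>
        (\<forall>w''\<in>Om. le w'' w' \<longrightarrow> (\<exists>v'\<in>Om. le v' v \<and> v' \<in> R w''))) \<and>
     (\<forall>E\<in>Ev. {w\<in>Om. R w \<subseteq> E} \<in> Ev)"

definition epistemic_frame ::
  "'w set \<Rightarrow> ('w \<Rightarrow> 'w \<Rightarrow> bool) \<Rightarrow> 'w set set \<Rightarrow> ('w \<Rightarrow> 'w set) \<Rightarrow>
   ('w \<Rightarrow> 'w set) \<Rightarrow> ('w \<Rightarrow> 'w set) \<Rightarrow> bool" where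
  "epistemic_frame Om le Ev A K B \<longleftrightarrow>
     awareness_frame Om le Ev A \<and>
     epistemic_rel Om le Ev K \<and> epistemic_rel Om le Ev B \<and>
     (\<forall>w\<in>Om. w \<in> K w) \<and> (\<forall>w\<in>Om. B w \<noteq> {}) \<and> (\<forall>w\<in>Om. B w \<subseteq> K w)"

end

theory Submission
  imports Defs
begin

lemma RO_downcl:
  assumes "poset Om le" "E \<in> RO Om le" "x \<in> E" "y \<in> Om" "le y x"
  shows "y \<in> E"
proof -
  have EO: "E \<subseteq> Om" and rE: "rho Om le E = E" using assms(2) by (auto simp: RO_def)
  have xO: "x \<in> Om" using EO assms(3) by auto
  have "x \<in> rho Om le E" using rE assms(3) by simp
  hence "y \<in> rho Om le E" using assms(1,4,5) xO unfolding rho_def poset_def by blast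
  thus ?thesis using rE by simp
qed

lemma neg_downcl:
  assumes "poset Om le" "x \<in> neg Om le E" "y \<in> Om" "le y x"
  shows "y \<in> neg Om le E"
  using assms unfolding neg_def poset_def by blast

lemma negneg:
  assumes "poset Om le" "E \<in> RO Om le"
  shows "neg Om le (neg Om le E) = E"
proof -
  have EO: "E \<subseteq> Om" and rE: "rho Om le E = E" using assms(2) by (auto simp: RO_def)
  have "neg Om le (neg Om le E) = rho Om le E"
  proof (intro set_eqI iffI)
    fix x assume x: "x \<in> neg Om le (neg Om le E)"
    show "x \<in> rho Om le E" unfolding rho_def
    proof (intro CollectI conjI ballI impI)
      show "x \<in> Om" using x by (simp add: neg_def)
      fix x' assume "x' \<in> Om" "le x' x"
      hence "x' \<notin> neg Om le E" using x by (simp add: neg_def)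
      then obtain y where "y \<in> Om" "le y x'" "y \<in> E" using \<open>x' \<in> Om\<close> by (auto simp: neg_def)
      thus "\<exists>w''\<in>Om. le w'' x' \<and> w'' \<in> down Om le E"
        using assms(1) unfolding down_def poset_def by blast
    qed
  next
    fix x assume x: "x \<in> rho Om le E"
    show "x \<in> neg Om le (neg Om le E)" unfolding neg_def
    proof (intro CollectI conjI ballI impI notI)
      show "x \<in> Om" using x by (simp add: rho_def)
      fix x' assume x': "x' \<in> Om" "le x' x" and xn: "x' \<in> {w \<in> Om. \<forall>w'\<in>Om. le w' w \<longrightarrow> w' \<notin> E}"
      then obtain y where y: "y \<in> Om" "le y x'" "y \<in> down Om le E" using x by (auto simp: rho_def)
      then obtain z where z: "z \<in> E" "le y z" by (auto simp: down_def)
      have "y \<in> E" using RO_downcl[OF assms z(1) y(1) z(2)] .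
      thus False using y xn by auto
    qed
  qed
  thus ?thesis using rE by simp
qed

lemma neg_inter:
  assumes "poset Om le" "E \<in> RO Om le" "F \<in> RO Om le"
  shows "neg Om le (E \<inter> F) = join Om le (neg Om le E) (neg Om le F)"
proof (intro set_eqI iffI)
  have EO: "E \<subseteq> Om" using assms(2) by (auto simp: RO_def)
  have FO: "F \<subseteq> Om" using assms(3) by (auto simp: RO_def)
  have tr: "\<And>a b c. a \<in> Om \<Longrightarrow> b \<in> Om \<Longrightarrow> c \<in> Om \<Longrightarrow> le a b \<Longrightarrow> le b c \<Longrightarrow> le a c"
    using assms(1) unfolding poset_def by blast
  have rf: "\<And>a. a \<in> Om \<Longrightarrow> le a a" using assms(1) unfolding poset_def by blast
  fix x
  {
    assume x: "x \<in> neg Om le (E \<inter> F)"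
    show "x \<in> join Om le (neg Om le E) (neg Om le F)" unfolding join_def rho_def
    proof (intro CollectI conjI ballI impI)
      show xO: "x \<in> Om" using x by (simp add: neg_def)
      fix x' assume x': "x' \<in> Om" "le x' x"
      show "\<exists>w''\<in>Om. le w'' x' \<and> w'' \<in> down Om le (neg Om le E \<union> neg Om le F)"
      proof (cases "x' \<in> neg Om le E")
        case True thus ?thesis using x' rf unfolding down_def by blast
      next
        case False
        then obtain y where y: "y \<in> Om" "le y x'" "y \<in> E" using x' by (auto simp: neg_def)
        have yx: "le y x" using tr y x' xO by blast
        have "y \<notin> F" using x y yx by (auto simp: neg_def)
        have "y \<in> neg Om le F"
        proof (rule ccontr)
          assume "y \<notin> neg Om le F"
          then obtain z where z: "z \<in> Om" "le z y" "z \<in> F" using y by (auto simp: neg_def)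
          have "z \<in> E" using RO_downcl[OF assms(1,2) y(3) z(1,2)] .
          moreover have "le z x" using tr z y yx xO by blast
          ultimately show False using x z by (auto simp: neg_def)
        qed
        thus ?thesis using y rf unfolding down_def by blast
      qed
    qed
  }
  {
    assume x: "x \<in> join Om le (neg Om le E) (neg Om le F)"
    show "x \<in> neg Om le (E \<inter> F)" unfolding neg_def
    proof (intro CollectI conjI ballI impI notI)
      show "x \<in> Om" using x by (simp add: join_def rho_def)
      fix x' assume x': "x' \<in> Om" "le x' x" "x' \<in> E \<inter> F"
      then obtain y where y: "y \<in> Om" "le y x'" "y \<in> down Om le (neg Om le E \<union> neg Om le F)"
        using x by (auto simp: join_def rho_def)
      then obtain z where z: "z \<in> neg Om le E \<union> neg Om le F" "le y z" by (auto simp: down_def)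
      have yE: "y \<in> E" using RO_downcl[OF assms(1,2) _ y(1,2)] x' by blast
      have yF: "y \<in> F" using RO_downcl[OF assms(1,3) _ y(1,2)] x' by blast
      have "y \<in> neg Om le E \<union> neg Om le F" using z neg_downcl[OF assms(1) _ y(1) z(2)] by blast
      thus False using yE yF y(1) rf by (auto simp: neg_def)
    qed
  }
qed

lemma maxs_down_self:
  assumes "poset Om le" "v \<in> Om"
  shows "maxs le (down Om le {v}) = {v}"
  using assms unfolding maxs_def down_def poset_def by blast

theorem corollary4p4:
  fixes Om :: "'w set" and le :: "'w \<Rightarrow> 'w \<Rightarrow> bool" and Ev :: "'w set set"
    and A K B :: "'w \<Rightarrow> 'w set" and w :: 'w
  assumes "epistemic_frame Om le Ev A K B"
    and "w \<in> Om"
  shows "Om \<in> {E\<in>Ev. w \<in> Aop Om le A E}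
       \<and> (\<forall>E\<in>{E\<in>Ev. w \<in> Aop Om le A E}. \<forall>F\<in>{E\<in>Ev. w \<in> Aop Om le A E}.
             E \<inter> F \<in> {E\<in>Ev. w \<in> Aop Om le A E})
       \<and> (\<forall>E\<in>{E\<in>Ev. w \<in> Aop Om le A E}. neg Om le E \<in> {E\<in>Ev. w \<in> Aop Om le A E})"
proof -
  have AF: "awareness_frame Om le Ev A" using assms(1) by (simp add: epistemic_frame_def)
  have P: "poset Om le" and ER: "Ev \<subseteq> RO Om le" and Ene: "Ev \<noteq> {}"
    and Eint: "\<forall>E\<in>Ev. \<forall>F\<in>Ev. E \<inter> F \<in> Ev" and Eneg: "\<forall>E\<in>Ev. neg Om le E \<in> Ev"
    using AF by (auto simp: awareness_frame_def possibility_frame_def)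
  have QP: "quasi_principal Om le Ev" using AF by (simp add: awareness_frame_def)
  have AO: "\<forall>w\<in>Om. A w \<subseteq> Om" using AF by (simp add: awareness_frame_def)
  have Adown: "\<forall>w\<in>Om. \<forall>v\<in>A w. down Om le {v} \<in> Ev" using AF by (simp add: awareness_frame_def)
  have Ajoin: "\<forall>w\<in>Om. \<forall>v\<in>A w. \<forall>E\<in>Ev. \<forall>E'\<in>Ev.
        maxs le (E \<inter> down Om le {v}) \<union> maxs le (E' \<inter> down Om le {v}) \<subseteq> A w \<longrightarrow>
        maxs le (join Om le E E' \<inter> down Om le {v}) \<subseteq> A w" using AF by (simp add: awareness_frame_def)
  have rf: "\<And>a. a \<in> Om \<Longrightarrow> le a a" using P unfolding poset_def by blast
  have tr: "\<And>a b c. a \<in> Om \<Longrightarrow> b \<in> Om \<Longrightarrow> c \<in> Om \<Longrightarrow> le a b \<Longrightarrow> le b c \<Longrightarrow> le a c"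
    using P unfolding poset_def by blast
  have negOm: "neg Om le Om = {}" using rf by (auto simp: neg_def)
  obtain E0 where E0: "E0 \<in> Ev" using Ene by blast
  have "E0 \<inter> neg Om le E0 = {}" using rf by (auto simp: neg_def)
  hence "{} \<in> Ev" using Eint Eneg E0 by metis
  moreover have "neg Om le {} = Om" by (auto simp: neg_def)
  ultimately have OmEv: "Om \<in> Ev" using Eneg by metis
  have downO: "\<And>v. Om \<inter> down Om le {v} = down Om le {v}" by (auto simp: down_def)
  have "w \<in> Aop Om le A Om"
    unfolding Aop_def
  proof (intro CollectI conjI ballI impI)
    show "w \<in> Om" by fact
    fix w' v assume w': "w' \<in> Om" "le w' w" and v: "v \<in> A w'"
    have "v \<in> Om" using AO w' v by blast
    thus "maxs le (Om \<inter> down Om le {v}) \<union> maxs le (neg Om le Om \<inter> down Om le {v}) \<subseteq> A w'"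
      using negOm downO maxs_down_self[OF P] v by (simp add: maxs_def)
  qed
  hence G1: "Om \<in> {E\<in>Ev. w \<in> Aop Om le A E}" using OmEv by simp
  have G3: "neg Om le E \<in> {E\<in>Ev. w \<in> Aop Om le A E}" if E: "E \<in> Ev" "w \<in> Aop Om le A E" for E
  proof -
    have "neg Om le (neg Om le E) = E" using negneg[OF P] ER E(1) by blast
    hence "Aop Om le A (neg Om le E) = Aop Om le A E" unfolding Aop_def by (simp add: Un_commute)
    thus ?thesis using E Eneg by auto
  qed
  have G2: "E \<inter> F \<in> {E\<in>Ev. w \<in> Aop Om le A E}"
    if E: "E \<in> Ev" "w \<in> Aop Om le A E" and F: "F \<in> Ev" "w \<in> Aop Om le A F" for E F
  proof -
    have ERO: "E \<in> RO Om le" and FRO: "F \<in> RO Om le" using ER E F by auto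
    have EF: "E \<inter> F \<in> Ev" using Eint E F by blast
    have "w \<in> Aop Om le A (E \<inter> F)" unfolding Aop_def
    proof (intro CollectI conjI ballI impI subsetI)
      show "w \<in> Om" by fact
      fix w' v x assume w': "w' \<in> Om" "le w' w" and v: "v \<in> A w'"
      have hE: "maxs le (E \<inter> down Om le {v}) \<union> maxs le (neg Om le E \<inter> down Om le {v}) \<subseteq> A w'"
        using E(2) w' v unfolding Aop_def by blast
      have hF: "\<And>u. u \<in> A w' \<Longrightarrow> maxs le (F \<inter> down Om le {u}) \<union> maxs le (neg Om le F \<inter> down Om le {u}) \<subseteq> A w'"
        using F(2) w' unfolding Aop_def by blast
      have vO: "v \<in> Om" using AO w' v by blast
      assume x: "x \<in> maxs le ((E \<inter> F) \<inter> down Om le {v}) \<union> maxs le (neg Om le (E \<inter> F) \<inter> down Om le {v})"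
      show "x \<in> A w'"
      proof (cases "x \<in> maxs le ((E \<inter> F) \<inter> down Om le {v})")
        case True
        hence xm: "x \<in> E" "x \<in> F" "x \<in> Om" "le x v"
          and xmax: "\<And>y. y \<in> E \<Longrightarrow> y \<in> F \<Longrightarrow> y \<in> Om \<Longrightarrow> le y v \<Longrightarrow> le x y \<Longrightarrow> le y x"
          by (auto simp: maxs_def down_def)
        have Ed: "E \<inter> down Om le {v} \<in> Ev" using Eint E(1) Adown w' v by blast
        have "x \<in> E \<inter> down Om le {v}" using xm by (auto simp: down_def)
        hence "x \<in> down Om le (maxs le (E \<inter> down Om le {v}))"
          using QP Ed unfolding quasi_principal_def by blast
        then obtain u where u: "u \<in> maxs le (E \<inter> down Om le {v})" "le x u" by (auto simp: down_def)
        have uA: "u \<in> A w'" using u hE by blast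
        have uE: "u \<in> E" "u \<in> Om" "le u v" using u by (auto simp: maxs_def down_def)
        have "x \<in> maxs le (F \<inter> down Om le {u})"
          unfolding maxs_def down_def
        proof (intro CollectI conjI notI)
          show "x \<in> F \<inter> {w \<in> Om. \<exists>v\<in>{u}. le w v}" using xm u by auto
          assume "\<exists>y\<in>F \<inter> {w \<in> Om. \<exists>v\<in>{u}. le w v}. le x y \<and> \<not> le y x"
          then obtain y where y: "y \<in> F" "y \<in> Om" "le y u" "le x y" "\<not> le y x" by auto
          have "y \<in> E" using RO_downcl[OF P ERO uE(1) y(2,3)] .
          moreover have "le y v" using tr y uE vO by blast
          ultimately show False using xmax y by blast
        qed
        thus ?thesis using hF[OF uA] by blast
      next
        case False
        hence x2: "x \<in> maxs le (join Om le (neg Om le E) (neg Om le F) \<inter> down Om le {v})"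
          using x neg_inter[OF P ERO FRO] by auto
        have "maxs le (neg Om le E \<inter> down Om le {v}) \<union> maxs le (neg Om le F \<inter> down Om le {v}) \<subseteq> A w'"
          using hE hF[OF v] by blast
        hence "maxs le (join Om le (neg Om le E) (neg Om le F) \<inter> down Om le {v}) \<subseteq> A w'"
          using Ajoin w' v Eneg E(1) F(1) by blast
        thus ?thesis using x2 by blast
      qed
    qed
    thus ?thesis using EF by simp
  qed
  show ?thesis using G1 G2 G3 by blast
qed

end
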